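(* Let $K$ be a convex body in $\mathbb{R}^d$ and $F$ a linear subspace of $\mathbb{R}^d$. Let $E=AB^d$, where $A$ is a positive definite $F$-operator, be an origin-centered ellipsoid of revolution with axis $F$ contained in $K$ which has maximal volume among all ellipsoids of revolution with axis $F$ contained in $K$. Then there are unit vectors $u_1,\dots,u_m$ and positive weights $\alpha_1,\dots,\alpha_m$ such that $(Au_1,A^{-1}u_1),\dots,(Au_m,A^{-1}u_m)$ are contact pairs of $E$ and $K$, and \[ P_F\Big(\sum_i\alpha_iu_i\otimes u_i\Big)P_F=P_F,\qquad\sum_i\alpha_iu_i=0,\qquad\sum_i\alpha_i=d. \]
   Context: A convex body is a compact convex set with nonempty interior; $B^d$ is the closed unit ball centered at the origin. For a linear subspace $F$, an $F$-operator is an invertible linear operator $A$ on $\mathbb{R}^d$ such that $F$ and $F^\perp$ are invariant under $A$ and $A|_{F^\perp}$ is a nonzero multiple of the identity on $F^\perp$. An ellipsoid of revolution with axis $F$ is a set $A'B^d+z$ with $A'$ an $F$-operator and $z\in\mathbb{R}^d$. $P_F$ is orthogonal projection onto $F$. The polar of $S$ is $S^\circ=\{p:\langle x,p\rangle\le1\ \forall x\in S\}$. For convex bodies $E\subseteq K$, a contact pair of $E$ and $K$ is a pair $(v,p)$ with $v\in\partial E\cap\partial K$, $p\in\partial E^\circ\cap\partial K^\circ$, $\langle p,v\rangle=1$. $u\otimes u$ is the operator $x\mapsto\langle u,x\rangle u$. *)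

theory Defs
  imports "HOL-Analysis.Analysis"
begin

definition convex_body :: "'a::euclidean_space set \<Rightarrow> bool" where
  "convex_body K \<longleftrightarrow> compact K \<and> convex K \<and> interior K \<noteq> {}"

definition orth_compl :: "'a::euclidean_space set \<Rightarrow> 'a set" where
  "orth_compl F = {x. \<forall>y\<in>F. x \<bullet> y = 0}"

definition F_operator :: "'a::euclidean_space set \<Rightarrow> ('a \<Rightarrow> 'a) \<Rightarrow> bool" where
  "F_operator F A \<longleftrightarrow> linear A \<and> bij A \<and> A ` F \<subseteq> F \<and>
     A ` orth_compl F \<subseteq> orth_compl F \<and>
     (\<exists>c. c \<noteq> 0 \<and> (\<forall>x\<in>orth_compl F. A x = c *\<^sub>R x))"

definition pos_def_op :: "('a::euclidean_space \<Rightarrow> 'a) \<Rightarrow> bool" where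
  "pos_def_op A \<longleftrightarrow> linear A \<and> (\<forall>x y. A x \<bullet> y = x \<bullet> A y) \<and> (\<forall>x. x \<noteq> 0 \<longrightarrow> A x \<bullet> x > 0)"

definition ellipsoid_rev :: "'a::euclidean_space set \<Rightarrow> 'a set \<Rightarrow> bool" where
  "ellipsoid_rev F E \<longleftrightarrow> (\<exists>A' z. F_operator F A' \<and> E = (\<lambda>x. A' x + z) ` cball 0 1)"

definition polar :: "'a::euclidean_space set \<Rightarrow> 'a set" where
  "polar S = {p. \<forall>x\<in>S. x \<bullet> p \<le> 1}"

definition contact_pair :: "'a::euclidean_space set \<Rightarrow> 'a set \<Rightarrow> 'a \<Rightarrow> 'a \<Rightarrow> bool" where
  "contact_pair E K v p \<longleftrightarrow> v \<in> frontier E \<inter> frontier K \<and>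
     p \<in> frontier (polar E) \<inter> frontier (polar K) \<and> p \<bullet> v = 1"

definition orth_proj :: "'a::euclidean_space set \<Rightarrow> 'a \<Rightarrow> 'a" where
  "orth_proj F x = (THE y. y \<in> F \<and> (\<forall>z\<in>F. (x - y) \<bullet> z = 0))"

definition tensor_self :: "'a::euclidean_space \<Rightarrow> 'a \<Rightarrow> 'a" where
  "tensor_self u x = (u \<bullet> x) *\<^sub>R u"

end

theory Submission
  imports Defs
begin

typedef (overloaded) ('a::euclidean_space) bidx = "{..<DIM('a)}" morphisms bnat Bidx
  by (rule exI[of _ 0]) simp

instance bidx :: (euclidean_space) finite
proof
  have "(UNIV :: 'a bidx set) = Bidx ` {..<DIM('a)}"
    by (metis type_definition.Abs_image type_definition_bidx)
  then show "finite (UNIV :: 'a bidx set)" by (metis finite_imageI finite_lessThan)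
qed

instantiation bidx :: (euclidean_space) linorder
begin
definition less_eq_bidx :: "'a bidx \<Rightarrow> 'a bidx \<Rightarrow> bool" where "less_eq_bidx x y \<longleftrightarrow> bnat x \<le> bnat y"
definition less_bidx :: "'a bidx \<Rightarrow> 'a bidx \<Rightarrow> bool" where "less_bidx x y \<longleftrightarrow> bnat x < bnat y"
instance by standard (auto simp: less_eq_bidx_def less_bidx_def bnat_inject)
end

instance bidx :: (euclidean_space) wellorder
proof
  fix P :: "'a bidx \<Rightarrow> bool" and a
  assume H: "\<And>x. (\<And>y. y < x \<Longrightarrow> P y) \<Longrightarrow> P x"
  have "\<forall>x. bnat x = n \<longrightarrow> P x" for n
  proof (induction n rule: less_induct)
    case (less n)
    then show ?case using H by (auto simp: less_bidx_def)
  qed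
  then show "P a" by blast
qed

definition benum :: "nat \<Rightarrow> 'a::euclidean_space" where
  "benum = (SOME f. bij_betw f {..<DIM('a)} Basis)"

lemma benum_bij: "bij_betw (benum :: nat \<Rightarrow> 'a::euclidean_space) {..<DIM('a)} Basis"
proof -
  obtain h where "bij_betw h {0..<card (Basis::'a set)} (Basis::'a set)"
    using ex_bij_betw_nat_finite[of "Basis::'a set"] by auto
  then have "\<exists>f. bij_betw f {..<DIM('a)} (Basis::'a set)" by (auto simp: lessThan_atLeast0)
  then show ?thesis unfolding benum_def by (rule someI_ex)
qed

definition bvec :: "'a bidx \<Rightarrow> 'a::euclidean_space" where
  "bvec i = benum (bnat i)"

lemma bvec_bij: "bij_betw (bvec :: 'a bidx \<Rightarrow> 'a::euclidean_space) UNIV Basis"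
proof -
  have "bij_betw (bnat :: 'a bidx \<Rightarrow> nat) UNIV {..<DIM('a)}"
    by (metis bij_betw_def inj_on_def bnat_inject type_definition.Rep_range type_definition_bidx)
  then show ?thesis unfolding bvec_def[abs_def]
    using benum_bij bij_betw_trans[of bnat UNIV "{..<DIM('a)}" benum Basis] by (simp add: comp_def)
qed

lemma bvec_Basis: "bvec i \<in> Basis" using bvec_bij bij_betwE by blast
lemma bvec_inj: "bvec i = bvec j \<longleftrightarrow> i = j" using bvec_bij by (auto simp: bij_betw_def inj_def)

lemma sum_bvec: "(\<Sum>i\<in>UNIV. f (bvec i)) = (\<Sum>b\<in>Basis. f b)"
  using sum.reindex_bij_betw[OF bvec_bij, of f] by simp

lemma prod_bvec: "(\<Prod>i\<in>UNIV. f (bvec i)) = (\<Prod>b\<in>Basis. f b)"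
  using prod.reindex_bij_betw[OF bvec_bij, of f] by simp

lemma bvec_inner: "bvec i \<bullet> bvec j = (if i = j then 1 else 0)"
  using bvec_Basis[of i] bvec_Basis[of j] bvec_inj[of i j] by (auto simp: inner_Basis)

definition tocart :: "'a::euclidean_space \<Rightarrow> real^('a bidx)" where
  "tocart x = (\<chi> i. x \<bullet> bvec i)"
definition fromcart :: "real^('a bidx) \<Rightarrow> 'a::euclidean_space" where
  "fromcart y = (\<Sum>i\<in>UNIV. (y $ i) *\<^sub>R bvec i)"

lemma tocart_fromcart[simp]: "tocart (fromcart y) = y"
  by (simp add: tocart_def fromcart_def vec_eq_iff inner_sum_left bvec_inner if_distrib cong: if_cong)

lemma fromcart_tocart[simp]: "fromcart (tocart x) = x"
proof -
  have "fromcart (tocart x) = (\<Sum>b\<in>Basis. (x \<bullet> b) *\<^sub>R b)"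
    unfolding fromcart_def tocart_def using sum_bvec[of "\<lambda>b. (x \<bullet> b) *\<^sub>R b"] by simp
  then show ?thesis by (simp add: euclidean_representation)
qed

lemma linear_tocart: "linear tocart"
  by (rule linearI) (auto simp: tocart_def vec_eq_iff inner_add_left)

lemma linear_fromcart: "linear fromcart"
  by (rule linearI) (auto simp: fromcart_def sum.distrib scaleR_add_left scaleR_sum_right)

lemma fromcart_inner: "fromcart y \<bullet> bvec i = y $ i"
  by (metis tocart_fromcart tocart_def vec_lambda_beta)

lemma cont_fromcart: "continuous_on UNIV (fromcart :: real^('a::euclidean_space bidx) \<Rightarrow> 'a)"
  by (simp add: linear_continuous_on linear_fromcart linear_linear)
lemma cont_tocart: "continuous_on UNIV (tocart :: 'a::euclidean_space \<Rightarrow> real^('a bidx))"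
  by (simp add: linear_continuous_on linear_tocart linear_linear)

lemma prod_Basis_cart: "(\<Prod>j\<in>(Basis :: (real^'n::finite) set). f j) = (\<Prod>i\<in>UNIV. f (axis i 1))"
  by (simp add: Basis_vec_def prod.UNION_disjoint axis_eq_axis)
  
lemma range_bvec: "range bvec = (Basis :: 'a::euclidean_space set)"
  using bvec_bij bij_betw_imp_surj_on by blast

lemma fromcart_box: "fromcart -` box l u = box (tocart l) (tocart (u::'a::euclidean_space))"
proof -
  have "x \<in> box l u \<longleftrightarrow> (\<forall>i. l \<bullet> bvec i < x \<bullet> bvec i \<and> x \<bullet> bvec i < u \<bullet> bvec i)" for x
    unfolding mem_box range_bvec[symmetric] by blast
  then show ?thesis
    by (auto simp: mem_box_cart fromcart_inner tocart_def)
qed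

lemma lborel_fromcart: "distr lborel borel fromcart = (lborel :: 'a::euclidean_space measure)"
proof (rule lborel_eqI[symmetric])
  fix l u :: 'a
  assume le: "\<And>b. b \<in> Basis \<Longrightarrow> l \<bullet> b \<le> u \<bullet> b"
  have meas: "fromcart \<in> borel_measurable (lborel :: (real^('a bidx)) measure)"
    using cont_fromcart borel_measurable_continuous_onI by auto
  have "emeasure (distr lborel borel fromcart) (box l u) = emeasure lborel (fromcart -` box l u)"
    using meas by (subst emeasure_distr) auto
  also have "\<dots> = emeasure lborel (box (tocart l) (tocart u))" by (simp add: fromcart_box)
  also have "\<dots> = (\<Prod>j\<in>Basis. (tocart u - tocart l) \<bullet> j)"
    by (rule emeasure_lborel_box) (auto simp: Basis_vec_def inner_axis tocart_def le bvec_Basis inner_diff_left)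
  also have "\<dots> = (\<Prod>i\<in>UNIV. (u - l) \<bullet> bvec i)"
    by (simp add: prod_Basis_cart inner_axis tocart_def inner_diff_left)
  also have "\<dots> = (\<Prod>b\<in>Basis. (u - l) \<bullet> b)" using prod_bvec[of "\<lambda>b. (u - l) \<bullet> b"] by simp
  finally show "emeasure (distr lborel borel fromcart) (box l u) = (\<Prod>b\<in>Basis. (u - l) \<bullet> b)" .
qed simp

lemma fromcart_vimage: "fromcart -` S = tocart ` S"
  by (auto simp: image_iff) (metis fromcart_tocart tocart_fromcart)+

lemma measure_tocart:
  fixes S :: "'a::euclidean_space set"
  assumes "compact S"
  shows "measure lebesgue (tocart ` S) = measure lebesgue S"
proof -
  have cS: "compact (tocart ` S)"
    using assms cont_tocart compact_continuous_image continuous_on_subset by blast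
  have meas: "fromcart \<in> borel_measurable (lborel :: (real^('a bidx)) measure)"
    using cont_fromcart borel_measurable_continuous_onI by auto
  have "measure lebesgue S = measure lborel S"
    using assms by (simp add: borel_compact)
  also have "\<dots> = measure (distr lborel borel fromcart) S" by (simp add: lborel_fromcart)
  also have "\<dots> = measure lborel (fromcart -` S)"
    using meas assms by (subst measure_distr) (auto simp: borel_compact)
  also have "\<dots> = measure lebesgue (tocart ` S)"
    using cS by (simp add: fromcart_vimage borel_compact)
  finally show ?thesis by simp
qed

definition cmat :: "('a::euclidean_space \<Rightarrow> 'a) \<Rightarrow> real^('a bidx)^('a bidx)" where
  "cmat f = matrix (\<lambda>y. tocart (f (fromcart y)))"

lemma linear_conj: "linear f \<Longrightarrow> linear (\<lambda>y. tocart (f (fromcart y)))"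
  using linear_compose[OF linear_compose[OF linear_fromcart] linear_tocart]
  by (simp add: comp_def)

lemma measure_linear_image_gen:
  fixes f :: "'a::euclidean_space \<Rightarrow> 'a"
  assumes f: "linear f" and S: "compact S"
  shows "measure lebesgue (f ` S) = \<bar>det (cmat f)\<bar> * measure lebesgue S"
proof -
  have cfS: "compact (f ` S)"
    using S f compact_continuous_image linear_continuous_on linear_linear continuous_on_subset by blast
  have cS: "compact (tocart ` S)"
    using S cont_tocart compact_continuous_image continuous_on_subset by blast
  have eq: "tocart ` f ` S = (\<lambda>y. tocart (f (fromcart y))) ` (tocart ` S)"
    by (simp add: image_image)
  have "measure lebesgue (f ` S) = measure lebesgue (tocart ` f ` S)"
    using measure_tocart[OF cfS] by simp
  also have "\<dots> = \<bar>det (cmat f)\<bar> * measure lebesgue (tocart ` S)"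
    unfolding eq cmat_def
    by (rule measure_linear_image[OF linear_conj[OF f]]) (simp add: cS lmeasurable_compact)
  also have "\<dots> = \<bar>det (cmat f)\<bar> * measure lebesgue S" using measure_tocart[OF S] by simp
  finally show ?thesis .
qed

lemma cmat_comp:
  assumes "linear f" "linear g"
  shows "cmat (f \<circ> g) = cmat f ** cmat g"
proof -
  have "(\<lambda>y. tocart ((f \<circ> g) (fromcart y))) = (\<lambda>y. tocart (f (fromcart y))) \<circ> (\<lambda>y. tocart (g (fromcart y)))"
    by (simp add: comp_def)
  then show ?thesis unfolding cmat_def
    using matrix_compose[OF linear_conj[OF assms(2)] linear_conj[OF assms(1)]] by simp
qed

lemma cmat_entry: "cmat f $ i $ j = f (bvec j) \<bullet> bvec i"
proof -
  have "fromcart (axis j 1 :: real^('a bidx)) = bvec j"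
    unfolding fromcart_def axis_def by (simp add: if_distrib[of "\<lambda>c. c *\<^sub>R _"] cong: if_cong)
  then show ?thesis by (simp add: cmat_def matrix_def tocart_def)
qed

lemma perm_fix_all_but_one:
  assumes p: "p permutes (UNIV :: 'n::finite set)" and fx: "\<forall>j. j \<noteq> i \<longrightarrow> p j = j"
  shows "p = id"
proof -
  have "p i = i"
  proof (rule ccontr)
    assume "p i \<noteq> i"
    then have "p (p i) = p i" using fx by auto
    then have "p i = i" using p by (metis permutes_inj injD)
    with \<open>p i \<noteq> i\<close> show False by simp
  qed
  then show ?thesis using fx by (auto simp: fun_eq_iff)
qed

lemma det_deriv:
  fixes N :: "real^'n::finite^'n"
  shows "((\<lambda>t. det (\<chi> i j. (if i = j then 1 else 0) + t * N$i$j)) has_real_derivative trace N) (at 0)"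
proof -
  note [derivative_intros] = has_field_derivative_prod
  let ?f = "\<lambda>p i t. (if i = p i then 1 else 0) + t * N$i$(p i)"
  have eq: "(\<lambda>t. det (\<chi> i j. (if i = j then 1 else (0::real)) + t * N$i$j)) =
     (\<lambda>t. \<Sum>p\<in>{p. p permutes (UNIV::'n set)}. of_int (sign p) * (\<Prod>i\<in>UNIV. ?f p i t))"
    by (simp add: det_def)
  have D: "((\<lambda>t. \<Sum>p\<in>{p. p permutes (UNIV::'n set)}. of_int (sign p) * (\<Prod>i\<in>UNIV. ?f p i t)) has_real_derivative
     (\<Sum>p\<in>{p. p permutes (UNIV::'n set)}. of_int (sign p) * (\<Sum>i\<in>UNIV. N$i$(p i) * (\<Prod>j\<in>UNIV-{i}. ?f p j 0)))) (at 0)"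
    by (auto intro!: derivative_eq_intros simp: mult.commute)
  have inner: "(\<Sum>i\<in>UNIV. N$i$(p i) * (\<Prod>j\<in>UNIV-{i}. ?f p j 0)) = (if p = id then trace N else 0)"
    if p: "p permutes (UNIV::'n set)" for p
  proof (cases "p = id")
    case True then show ?thesis by (simp add: trace_def)
  next
    case False
    have "N$i$(p i) * (\<Prod>j\<in>UNIV-{i}. ?f p j 0) = 0" for i
    proof -
      obtain j where "j \<noteq> i" "p j \<noteq> j" using perm_fix_all_but_one[OF p, of i] False by blast
      then have "(\<Prod>j\<in>UNIV-{i}. ?f p j 0) = 0"
        by (intro prod_zero) (auto intro!: bexI[of _ j])
      then show ?thesis by (simp only: mult_zero_right)
    qed
    then have "(\<Sum>i\<in>UNIV. N$i$(p i) * (\<Prod>j\<in>UNIV-{i}. ?f p j 0)) = 0"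
      by (intro sum.neutral) blast
    then show ?thesis using False by simp
  qed
  have "(\<Sum>p\<in>{p. p permutes (UNIV::'n set)}. of_int (sign p) * (\<Sum>i\<in>UNIV. N$i$(p i) * (\<Prod>j\<in>UNIV-{i}. ?f p j 0)))
      = (\<Sum>p\<in>{p. p permutes (UNIV::'n set)}. of_int (sign p) * (if p = id then trace N else 0))"
    by (rule sum.cong[OF refl], subst inner) auto
  also have "\<dots> = trace N"
    by (simp add: if_distrib[of "\<lambda>x. of_int (sign _) * x"] sum.delta' permutes_id sign_id cong: if_cong)
  finally show ?thesis using D unfolding eq by simp
qed

lemma det_perturb:
  fixes N :: "real^'n::finite^'n"
  assumes "trace N > 0"
  shows "\<exists>d>0. \<forall>t. 0 < t \<and> t < d \<longrightarrow> det (\<chi> i j. (if i = j then 1 else 0) + t * N$i$j) > 1"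
proof -
  obtain d where d: "d > 0" "\<And>h. h > 0 \<Longrightarrow> h < d \<Longrightarrow>
     det (\<chi> i j. (if i = j then 1 else (0::real)) + 0 * N$i$j) < det (\<chi> i j. (if i = j then 1 else 0) + (0 + h) * N$i$j)"
    using DERIV_pos_inc_right[OF det_deriv assms] by blast
  have "(\<chi> i j. (if i = j then 1 else (0::real)) + 0 * N$i$j) = mat 1" by (simp add: mat_def)
  then show ?thesis using d by (auto simp: det_I)
qed

lemma proj_char:
  assumes F: "subspace F"
  shows "orth_proj F x \<in> F \<and> (\<forall>z\<in>F. (x - orth_proj F x) \<bullet> z = 0)"
proof -
  obtain y z where yz: "y \<in> span F" "\<And>w. w \<in> span F \<Longrightarrow> orthogonal z w" "x = y + z"
    using orthogonal_subspace_decomp_exists by blast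
  have ex: "y \<in> F \<and> (\<forall>w\<in>F. (x - y) \<bullet> w = 0)"
    using yz F by (metis add_diff_cancel_left' orthogonal_def span_eq_iff)
  have uniq: "y' = y" if "y' \<in> F \<and> (\<forall>w\<in>F. (x - y') \<bullet> w = 0)" for y'
  proof -
    have d: "y - y' \<in> F" using that ex F by (simp add: subspace_diff)
    have "(x - y') \<bullet> (y - y') - (x - y) \<bullet> (y - y') = 0" using that ex d by simp
    then have "(y - y') \<bullet> (y - y') = 0" by (simp add: inner_diff_left)
    then show ?thesis by simp
  qed
  show ?thesis unfolding orth_proj_def
    apply (rule theI[where a=y]) using ex apply blast using uniq by blast
qed

lemma proj_unique:
  assumes F: "subspace F" and "y \<in> F" "\<forall>z\<in>F. (x - y) \<bullet> z = 0"
  shows "orth_proj F x = y"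
proof -
  have p: "orth_proj F x \<in> F" "\<forall>z\<in>F. (x - orth_proj F x) \<bullet> z = 0" using proj_char[OF F] by auto
  have d: "y - orth_proj F x \<in> F" using p assms by (simp add: subspace_diff)
  have "(x - orth_proj F x) \<bullet> (y - orth_proj F x) - (x - y) \<bullet> (y - orth_proj F x) = 0" using p assms d by simp
  then have "(y - orth_proj F x) \<bullet> (y - orth_proj F x) = 0" by (simp add: inner_diff_left)
  then show ?thesis by simp
qed

lemma proj_in: "subspace F \<Longrightarrow> orth_proj F x \<in> F"
  using proj_char by blast
lemma proj_orth: "subspace F \<Longrightarrow> z \<in> F \<Longrightarrow> (x - orth_proj F x) \<bullet> z = 0"
  using proj_char by blast

lemma proj_sym: assumes F: "subspace F" shows "orth_proj F x \<bullet> y = x \<bullet> orth_proj F y"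
proof -
  have 1: "orth_proj F x \<bullet> y = orth_proj F x \<bullet> orth_proj F y"
    using proj_orth[OF F proj_in[OF F], of y x] by (simp add: inner_diff_left inner_diff_right inner_commute)
  have 2: "x \<bullet> orth_proj F y = orth_proj F x \<bullet> orth_proj F y"
    using proj_orth[OF F proj_in[OF F], of x y] by (simp add: inner_diff_left)
  show ?thesis using 1 2 by simp
qed

lemma proj_linear: assumes F: "subspace F" shows "linear (orth_proj F)"
proof (rule linearI)
  fix x y :: 'a and c :: real
  show "orth_proj F (x + y) = orth_proj F x + orth_proj F y"
  proof (rule proj_unique[OF F])
    show "orth_proj F x + orth_proj F y \<in> F" using F proj_in subspace_add by blast
    show "\<forall>z\<in>F. (x + y - (orth_proj F x + orth_proj F y)) \<bullet> z = 0"
    proof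
      fix z assume "z \<in> F"
      then have "(x - orth_proj F x) \<bullet> z = 0" "(y - orth_proj F y) \<bullet> z = 0" using proj_orth[OF F] by auto
      then show "(x + y - (orth_proj F x + orth_proj F y)) \<bullet> z = 0" by (simp add: algebra_simps inner_diff_left inner_add_left)
    qed
  qed
  show "orth_proj F (c *\<^sub>R x) = c *\<^sub>R orth_proj F x"
  proof (rule proj_unique[OF F])
    show "c *\<^sub>R orth_proj F x \<in> F" using F proj_in subspace_scale by blast
    show "\<forall>z\<in>F. (c *\<^sub>R x - c *\<^sub>R orth_proj F x) \<bullet> z = 0"
    proof
      fix z assume "z \<in> F"
      have "(c *\<^sub>R x - c *\<^sub>R orth_proj F x) \<bullet> z = c * ((x - orth_proj F x) \<bullet> z)"
        by (simp add: algebra_simps inner_diff_left)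
      then show "(c *\<^sub>R x - c *\<^sub>R orth_proj F x) \<bullet> z = 0" using proj_orth[OF F \<open>z \<in> F\<close>] by simp
    qed
  qed
qed

lemma proj_id: "subspace F \<Longrightarrow> x \<in> F \<Longrightarrow> orth_proj F x = x"
  by (rule proj_unique) auto

lemma proj_zero: "subspace F \<Longrightarrow> x \<in> orth_compl F \<Longrightarrow> orth_proj F x = 0"
  by (rule proj_unique) (auto simp: orth_compl_def subspace_0)

lemma proj_compl: "subspace F \<Longrightarrow> x - orth_proj F x \<in> orth_compl F"
  using proj_orth by (auto simp: orth_compl_def)

lemma linear_inv_op:
  fixes A :: "'a::euclidean_space \<Rightarrow> 'a"
  assumes "linear A" "bij A"
  shows "linear (inv A) \<and> (\<forall>x. inv A (A x) = x) \<and> (\<forall>x. A (inv A x) = x)"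
proof -
  obtain h where h: "linear h" "\<And>x. h (A x) = x" "\<And>x. A (h x) = x"
    using assms by (metis bij_betw_imp_surj linear_surjective_isomorphism)
  have "inv A = h"
    by (rule ext) (metis assms(2) bij_inv_eq_iff h(3))
  then show ?thesis using h by simp
qed

lemma interior_scale:
  fixes x :: "'a::real_normed_vector"
  assumes "x \<in> interior T"
  shows "\<exists>t>0. (1 + t) *\<^sub>R x \<in> T"
proof -
  obtain e where e: "e > 0" "ball x e \<subseteq> T" using assms mem_interior by blast
  define t where "t = e / (2 * (norm x + 1))"
  have t: "t > 0" unfolding t_def using e by (intro divide_pos_pos) (auto intro: add_nonneg_pos)
  have "dist x ((1 + t) *\<^sub>R x) = t * norm x"
    using t by (simp add: dist_norm algebra_simps)
  also have "\<dots> < e"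
  proof -
    have "t * norm x \<le> t * (norm x + 1)" using t by simp
    also have "\<dots> = e / 2"
    proof -
      have "norm x + 1 \<noteq> 0" by (metis add_nonneg_pos norm_ge_zero zero_less_one less_irrefl)
      then show ?thesis unfolding t_def by (simp add: field_simps)
    qed
    finally show ?thesis using e by simp
  qed
  finally show ?thesis using e t by auto
qed

lemma frontier_notI:
  fixes x :: "'a::real_normed_vector"
  assumes "x \<in> S" "\<And>t. t > 0 \<Longrightarrow> (1 + t) *\<^sub>R x \<notin> S"
  shows "x \<in> frontier S"
  using assms interior_scale closure_subset unfolding frontier_def by blast

context
  fixes A :: "'a::euclidean_space \<Rightarrow> 'a" and K :: "'a set"
  assumes lin: "linear A" and bj: "bij A" and symA: "\<And>x y. A x \<bullet> y = x \<bullet> A y"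
    and cvx: "convex K" and sub: "A ` cball 0 1 \<subseteq> K"
begin

lemma Ai: "linear (inv A)" "\<And>x. inv A (A x) = x" "\<And>x. A (inv A x) = x"
  using linear_inv_op[OF lin bj] by auto

lemma key_polar:
  assumes u: "norm u = 1" and fr: "A u \<in> frontier K" and x: "x \<in> K"
  shows "x \<bullet> inv A u \<le> 1"
proof (rule ccontr)
  assume "\<not> x \<bullet> inv A u \<le> 1"
  define q where "q = inv A x"
  have xq: "x = A q" by (simp add: q_def Ai)
  have "x \<bullet> inv A u = q \<bullet> u" by (simp add: xq symA Ai)
  then have qu: "q \<bullet> u > 1" using \<open>\<not> x \<bullet> inv A u \<le> 1\<close> by simp
  define t where "t = min (1/2) ((q \<bullet> u - 1) / (q \<bullet> q + 1))"
  have qq: "q \<bullet> q + 1 > 0" by (simp add: add_nonneg_pos)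
  have t0: "t > 0" using qu qq by (simp add: t_def)
  have t1: "t \<le> 1/2" unfolding t_def by (rule min.cobounded1)
  have "t \<le> (q \<bullet> u - 1) / (q \<bullet> q + 1)" unfolding t_def by (rule min.cobounded2)
  then have t2: "t * (q \<bullet> q + 1) \<le> q \<bullet> u - 1"
    using qq by (simp add: pos_le_divide_eq)
  define w0 where "w0 = (1 / (1 - t)) *\<^sub>R (u - t *\<^sub>R q)"
  have uu: "u \<bullet> u = 1" using u by (simp add: dot_square_norm)
  have "norm (u - t *\<^sub>R q) ^ 2 = (u - t *\<^sub>R q) \<bullet> (u - t *\<^sub>R q)" by (simp add: power2_norm_eq_inner)
  also have "\<dots> = 1 - 2 * t * (q \<bullet> u) + t^2 * (q \<bullet> q)"
    by (simp add: inner_diff_left inner_diff_right uu inner_commute power2_eq_square algebra_simps)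
  also have "\<dots> < (1 - t)^2"
  proof -
    have "t * (t * (q \<bullet> q + 1)) \<le> t * (q \<bullet> u - 1)" using t2 t0 by (simp add: mult_left_mono)
    moreover have "t * 1 < t * (q \<bullet> u)" using mult_strict_left_mono[OF qu t0] by simp
    moreover have "t * t \<ge> 0" by simp
    moreover have "1 - 2 * t * (q \<bullet> u) + t^2 * (q \<bullet> q) = 1 - 2 * (t * (q \<bullet> u)) + t * (t * (q \<bullet> q))"
      by (simp add: power2_eq_square algebra_simps)
    moreover have "(1 - t)^2 = 1 - 2 * t + t * t" by (simp add: power2_eq_square algebra_simps)
    moreover have "t * (t * (q \<bullet> q + 1)) = t * (t * (q \<bullet> q)) + t * t" "t * (q \<bullet> u - 1) = t * (q \<bullet> u) - t"
      by (simp_all add: algebra_simps)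
    ultimately show ?thesis by linarith
  qed
  finally have sq: "norm (u - t *\<^sub>R q) ^ 2 < (1 - t) ^ 2" .
  have "0 \<le> 1 - t" using t1 by linarith
  from power2_less_imp_less[OF sq this] have "norm (u - t *\<^sub>R q) < 1 - t" .
  then have w0: "norm w0 < 1" using t1 by (simp add: w0_def divide_simps)
  define g where "g = (\<lambda>y. inv A ((1 / (1 - t)) *\<^sub>R (y - t *\<^sub>R x)))"
  have contg: "continuous_on UNIV g"
  proof -
    have cA: "continuous_on UNIV (inv A)" using Ai(1) by (simp add: linear_continuous_on linear_linear)
    have "continuous_on UNIV (\<lambda>y. (1 / (1 - t)) *\<^sub>R (y - t *\<^sub>R x))" by (intro continuous_intros)
    then show ?thesis unfolding g_def by (rule continuous_on_compose2[OF cA]) auto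
  qed
  define Ov where "Ov = g -` ball 0 1"
  have "open Ov" unfolding Ov_def by (rule open_vimage[OF open_ball contg])
  have "(1 / (1 - t)) *\<^sub>R (A u - t *\<^sub>R A q) = A ((1 / (1 - t)) *\<^sub>R (u - t *\<^sub>R q))"
    by (simp add: linear_diff[OF lin] linear_scale[OF lin])
  then have "g (A u) = w0"
    unfolding g_def w0_def xq by (simp add: Ai)
  then have "A u \<in> Ov" using w0 by (simp add: Ov_def)
  have "Ov \<subseteq> K"
  proof
    fix y assume "y \<in> Ov"
    then have gy: "norm (g y) < 1" by (simp add: Ov_def)
    have "A (g y) \<in> K" using sub gy by auto
    moreover have "A (g y) = (1 / (1 - t)) *\<^sub>R (y - t *\<^sub>R x)" by (simp add: g_def Ai)
    ultimately have m: "(1 / (1 - t)) *\<^sub>R (y - t *\<^sub>R x) \<in> K" by simp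
    have "(1 - t) *\<^sub>R ((1 / (1 - t)) *\<^sub>R (y - t *\<^sub>R x)) + t *\<^sub>R x \<in> K"
      by (rule convexD[OF cvx m x]) (use t0 t1 in auto)
    moreover have "(1 - t) *\<^sub>R ((1 / (1 - t)) *\<^sub>R (y - t *\<^sub>R x)) + t *\<^sub>R x = y" using t1 by simp
    ultimately show "y \<in> K" by simp
  qed
  then have "A u \<in> interior K" using \<open>open Ov\<close> \<open>A u \<in> Ov\<close> interior_maximal by blast
  then show False using fr by (simp add: frontier_def)
qed

lemma contact:
  assumes u: "norm u = 1" and fr: "A u \<in> frontier K"
  shows "contact_pair (A ` cball 0 1) K (A u) (inv A u)"
proof -
  have uu: "u \<bullet> u = 1" using u by (simp add: dot_square_norm)
  have inj: "inj A" using bj bij_is_inj by blast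
  have AuE: "A u \<in> A ` cball 0 1" using u by auto
  have AuK: "A u \<in> K" using AuE sub by auto
  have pAu: "inv A u \<bullet> A u = 1" using symA[of "inv A u" u] by (simp add: Ai uu inner_commute)
  have 1: "A u \<in> frontier (A ` cball 0 1)"
  proof (rule frontier_notI[OF AuE])
    fix t :: real assume t: "t > 0"
    show "(1 + t) *\<^sub>R A u \<notin> A ` cball 0 1"
    proof
      assume "(1 + t) *\<^sub>R A u \<in> A ` cball 0 1"
      then obtain v where v: "norm v \<le> 1" "(1 + t) *\<^sub>R A u = A v" by auto
      then have "A ((1 + t) *\<^sub>R u) = A v" by (simp add: linear_scale[OF lin])
      then have "v = (1 + t) *\<^sub>R u" using inj by (simp add: inj_eq)
      then show False using v t u by simp
    qed
  qed
  have 2: "inv A u \<in> frontier (polar (A ` cball 0 1))"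
  proof (rule frontier_notI)
    show "inv A u \<in> polar (A ` cball 0 1)"
    proof (clarsimp simp: polar_def)
      fix v :: 'a assume "norm v \<le> 1"
      have "A v \<bullet> inv A u = v \<bullet> u" by (simp add: symA Ai)
      also have "\<dots> \<le> norm v * norm u" by (rule norm_cauchy_schwarz)
      also have "\<dots> \<le> 1" using \<open>norm v \<le> 1\<close> u by simp
      finally show "A v \<bullet> inv A u \<le> 1" .
    qed
    fix t :: real assume "t > 0"
    show "(1 + t) *\<^sub>R inv A u \<notin> polar (A ` cball 0 1)"
    proof
      assume "(1 + t) *\<^sub>R inv A u \<in> polar (A ` cball 0 1)"
      then have "A u \<bullet> ((1 + t) *\<^sub>R inv A u) \<le> 1" using AuE unfolding polar_def by blast
      then show False using pAu \<open>t > 0\<close> by (simp add: inner_commute)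
    qed
  qed
  have 3: "inv A u \<in> frontier (polar K)"
  proof (rule frontier_notI)
    show "inv A u \<in> polar K" using key_polar[OF u fr] by (auto simp: polar_def)
    fix t :: real assume "t > 0"
    show "(1 + t) *\<^sub>R inv A u \<notin> polar K"
    proof
      assume "(1 + t) *\<^sub>R inv A u \<in> polar K"
      then have "A u \<bullet> ((1 + t) *\<^sub>R inv A u) \<le> 1" using AuK unfolding polar_def by blast
      then show False using pAu \<open>t > 0\<close> by (simp add: inner_commute)
    qed
  qed
  show ?thesis unfolding contact_pair_def using 1 2 3 fr pAu by auto
qed

end

lemma sqrt_bound:
  fixes p :: "'a::real_inner"
  assumes "norm p = 1" "\<epsilon> \<ge> 0" "norm s \<le> Bs" "\<epsilon> * Bs \<le> 1"
  shows "norm (p + \<epsilon> *\<^sub>R s) \<le> 1 + \<epsilon> * (p \<bullet> s) + \<epsilon>^2 * Bs^2 / 2"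
proof -
  have pp: "p \<bullet> p = 1" using assms(1) by (simp add: dot_square_norm)
  have ss: "s \<bullet> s \<le> Bs^2" using assms(3) by (metis dot_square_norm norm_ge_zero power_mono)
  have ps: "\<bar>p \<bullet> s\<bar> \<le> Bs" using Cauchy_Schwarz_ineq2[of p s] assms by simp
  have "\<epsilon> * \<bar>p \<bullet> s\<bar> \<le> \<epsilon> * Bs" by (rule mult_left_mono[OF ps assms(2)])
  then have e1: "\<epsilon> * \<bar>p \<bullet> s\<bar> \<le> 1" using assms(4) by linarith
  have "- (\<epsilon> * (p \<bullet> s)) \<le> \<epsilon> * \<bar>p \<bullet> s\<bar>" using assms(2)
    by (metis abs_ge_minus_self abs_mult abs_of_nonneg abs_minus_cancel minus_mult_right mult_left_mono)
  then have c0: "0 \<le> 1 + \<epsilon> * (p \<bullet> s) + \<epsilon>^2 * Bs^2 / 2" using e1 by (simp add: add_nonneg_nonneg)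
  have "norm (p + \<epsilon> *\<^sub>R s) ^ 2 = (p + \<epsilon> *\<^sub>R s) \<bullet> (p + \<epsilon> *\<^sub>R s)" by (simp add: power2_norm_eq_inner)
  also have "\<dots> = 1 + 2 * (\<epsilon> * (p \<bullet> s)) + \<epsilon>^2 * (s \<bullet> s)"
    by (simp add: inner_add_left inner_add_right pp inner_commute power2_eq_square algebra_simps)
  also have "\<dots> \<le> 1 + 2 * (\<epsilon> * (p \<bullet> s)) + \<epsilon>^2 * Bs^2"
    using ss by (simp add: mult_left_mono)
  also have "\<dots> \<le> (1 + \<epsilon> * (p \<bullet> s) + \<epsilon>^2 * Bs^2 / 2) ^ 2"
  proof -
    have "(1 + \<epsilon> * (p \<bullet> s) + \<epsilon>^2 * Bs^2 / 2) ^ 2 = 1 + 2 * (\<epsilon> * (p \<bullet> s)) + \<epsilon>^2 * Bs^2 + (\<epsilon> * (p \<bullet> s) + \<epsilon>^2 * Bs^2 / 2)^2"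
      by (simp add: power2_eq_square algebra_simps)
    then show ?thesis by simp
  qed
  finally show ?thesis using c0 by (rule power2_le_imp_le)
qed

lemma containment:
  fixes A S :: "'a::euclidean_space \<Rightarrow> 'a" and K :: "'a set" and z :: 'a
  assumes lin: "linear A" and bj: "bij A"
    and cK: "compact K" and cvx: "convex K" and sub: "A ` cball 0 1 \<subseteq> K"
    and linS: "linear S" and symS: "\<And>x y. S x \<bullet> y = x \<bullet> S y"
    and neg: "\<And>u. norm u = 1 \<Longrightarrow> A u \<in> frontier K \<Longrightarrow> u \<bullet> S u + z \<bullet> u < 0"
  shows "\<exists>\<epsilon>1>0. \<forall>\<epsilon>. 0 < \<epsilon> \<and> \<epsilon> < \<epsilon>1 \<longrightarrow> (\<forall>v. norm v \<le> 1 \<longrightarrow> A (v + \<epsilon> *\<^sub>R S v + \<epsilon> *\<^sub>R z) \<in> K)"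
proof -
  have Ai: "linear (inv A)" "\<And>x. inv A (A x) = x" "\<And>x. A (inv A x) = x"
    using linear_inv_op[OF lin bj] by auto
  define K' where "K' = inv A ` K"
  have memK': "y \<in> K' \<longleftrightarrow> A y \<in> K" for y
    unfolding K'_def by (metis Ai(2,3) image_iff)
  have cK': "compact K'" unfolding K'_def
    using cK Ai(1) by (intro compact_continuous_image) (simp add: linear_continuous_on linear_linear)
  have cvK': "convex K'" unfolding K'_def using convex_linear_image Ai(1) cvx by blast
  obtain R where R: "R > 0" "\<And>y. y \<in> K' \<Longrightarrow> norm y \<le> R"
    using compact_imp_bounded[OF cK'] bounded_pos by metis
  have ball': "y \<in> K'" if "norm y \<le> 1" for y using that sub memK' by auto
  then have ne: "K' \<noteq> {}" by (metis norm_zero zero_le_one empty_iff)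
  define \<psi> where "\<psi> p = Sup ((\<lambda>y. p \<bullet> y) ` K')" for p
  have bdd: "bdd_above ((\<lambda>y. p \<bullet> y) ` K')" for p
  proof
    fix r assume "r \<in> (\<lambda>y. p \<bullet> y) ` K'"
    then obtain y where y: "y \<in> K'" "r = p \<bullet> y" by auto
    have "p \<bullet> y \<le> norm p * norm y" by (rule norm_cauchy_schwarz)
    also have "\<dots> \<le> norm p * R" using R y by (simp add: mult_left_mono)
    finally show "r \<le> norm p * R" using y by simp
  qed
  have psi_up: "p \<bullet> y \<le> \<psi> p" if "y \<in> K'" for p y
    unfolding \<psi>_def using that bdd by (intro cSup_upper) auto
  have psi_le: "\<psi> p \<le> c" if "\<And>y. y \<in> K' \<Longrightarrow> p \<bullet> y \<le> c" for p c
    unfolding \<psi>_def using that ne by (intro cSup_least) auto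
  have lip1: "\<psi> p \<le> \<psi> q + R * dist p q" for p q
  proof (rule psi_le)
    fix y assume y: "y \<in> K'"
    have "p \<bullet> y = q \<bullet> y + (p - q) \<bullet> y" by (simp add: inner_diff_left)
    also have "(p - q) \<bullet> y \<le> norm (p - q) * norm y" by (rule norm_cauchy_schwarz)
    also have "\<dots> \<le> norm (p - q) * R" using R y by (simp add: mult_left_mono)
    finally show "p \<bullet> y \<le> \<psi> q + R * dist p q" using psi_up[OF y, of q] by (simp add: dist_norm mult.commute)
  qed
  have cont_psi: "continuous_on UNIV \<psi>"
  proof (rule lipschitz_on_continuous_on)
    show "R-lipschitz_on UNIV \<psi>"
    proof (rule lipschitz_onI)
      fix p q :: 'a
      show "dist (\<psi> p) (\<psi> q) \<le> R * dist p q"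
        using lip1[of p q] lip1[of q p] by (simp add: dist_real_def dist_commute abs_le_iff)
    qed (use R in simp)
  qed
  define g where "g u = u \<bullet> S u + z \<bullet> u" for u
  define \<Phi> where "\<Phi> p = max (- g p) (\<psi> p - 1)" for p
  have cont_g: "continuous_on UNIV g"
    unfolding g_def using linS
    by (intro continuous_intros) (simp add: linear_continuous_on linear_linear)
  have cont_Phi: "continuous_on (sphere 0 1) \<Phi>"
    unfolding \<Phi>_def using cont_g cont_psi
    by (intro continuous_intros) (auto intro: continuous_on_subset)
  have psi_ge1: "\<psi> p \<ge> 1" if "norm p = 1" for p
  proof -
    have "p \<bullet> p \<le> \<psi> p" using psi_up ball' that by simp
    then show ?thesis using that by (simp add: dot_square_norm)
  qed
  have Phi_pos: "\<Phi> p > 0" if p: "norm p = 1" for p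
  proof (cases "\<psi> p \<le> 1")
    case True
    have ApK: "A p \<in> K" using ball' p memK' by simp
    have "A p \<notin> interior K"
    proof
      assume "A p \<in> interior K"
      then obtain t where t: "t > 0" "(1 + t) *\<^sub>R A p \<in> K" using interior_scale by blast
      then have "(1 + t) *\<^sub>R p \<in> K'" using memK' by (simp add: linear_scale[OF lin])
      then have "p \<bullet> ((1 + t) *\<^sub>R p) \<le> \<psi> p" by (rule psi_up)
      then show False using True t p by (simp add: dot_square_norm)
    qed
    then have "A p \<in> frontier K" using ApK closure_subset by (auto simp: frontier_def)
    then have "g p < 0" using neg[OF p] by (simp add: g_def)
    then show ?thesis by (simp add: \<Phi>_def)
  next
    case False
    then show ?thesis by (simp add: \<Phi>_def)
  qed
  obtain b0 :: 'a where "b0 \<in> Basis" by (meson ex_in_conv nonempty_Basis)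
  then have sne: "sphere (0::'a) 1 \<noteq> {}" by (auto intro!: exI[of _ b0])
  obtain p0 where p0: "p0 \<in> sphere 0 1" "\<And>p. p \<in> sphere 0 1 \<Longrightarrow> \<Phi> p0 \<le> \<Phi> p"
    using continuous_attains_inf[OF compact_sphere sne cont_Phi] by blast
  define \<eta> where "\<eta> = \<Phi> p0"
  have eta: "\<eta> > 0" using Phi_pos p0 by (simp add: \<eta>_def)
  have etale: "\<eta> \<le> \<Phi> p" if "norm p = 1" for p using p0 that by (simp add: \<eta>_def)
  obtain Bs where Bs: "Bs > 0" "\<And>x. norm (S x) \<le> Bs * norm x" using linear_bounded_pos[OF linS] by blast
  define C where "C = Bs + norm z + Bs^2 + 1"
  have C: "C > 0" "Bs^2 / 2 < C" "Bs + norm z + Bs^2 / 2 < C" using Bs by (auto simp: C_def add_pos_nonneg)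
  define \<epsilon>1 where "\<epsilon>1 = min (1 / (Bs + 1)) (\<eta> / C)"
  have "\<epsilon>1 > 0" using Bs eta C by (simp add: \<epsilon>1_def)
  moreover have "A (v + \<epsilon> *\<^sub>R S v + \<epsilon> *\<^sub>R z) \<in> K" if e: "0 < \<epsilon>" "\<epsilon> < \<epsilon>1" and v: "norm v \<le> 1" for \<epsilon> v
  proof (rule ccontr)
    assume "A (v + \<epsilon> *\<^sub>R S v + \<epsilon> *\<^sub>R z) \<notin> K"
    define y where "y = v + \<epsilon> *\<^sub>R S v + \<epsilon> *\<^sub>R z"
    have "y \<notin> K'" using memK' \<open>A _ \<notin> K\<close> by (simp add: y_def)
    then obtain a b where ab: "a \<bullet> y < b" "\<And>x. x \<in> K' \<Longrightarrow> b < a \<bullet> x"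
      using separating_hyperplane_closed_point[OF cvK' compact_imp_closed[OF cK']] by blast
    have "a \<noteq> 0" using ab ne by force
    define p where "p = - ((1 / norm a) *\<^sub>R a)"
    have p: "norm p = 1" using \<open>a \<noteq> 0\<close> by (simp add: p_def)
    have "p \<bullet> x \<le> p \<bullet> y" if "x \<in> K'" for x
    proof -
      have "a \<bullet> y \<le> a \<bullet> x" using ab that by force
      then have "a \<bullet> y / norm a \<le> a \<bullet> x / norm a" by (rule divide_right_mono) simp
      then show ?thesis by (simp add: p_def)
    qed
    then have psi_y: "\<psi> p \<le> p \<bullet> y" by (rule psi_le)
    have "\<epsilon> < 1 / (Bs + 1)" "\<epsilon> < \<eta> / C" using e by (auto simp: \<epsilon>1_def)
    then have e1: "\<epsilon> * (Bs + 1) < 1" and e2: "\<epsilon> * C < \<eta>" using Bs C by (simp_all add: pos_less_divide_eq)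
    have eB: "\<epsilon> * Bs \<le> 1" using e1 e by (simp add: algebra_simps)
    have e_le1: "\<epsilon> \<le> 1" using e1 e Bs by (smt (verit) mult_le_cancel_left1)
    have "p \<bullet> y = (p + \<epsilon> *\<^sub>R S p) \<bullet> v + \<epsilon> * (z \<bullet> p)"
      using symS[of p v] by (simp add: y_def inner_add_left inner_add_right inner_commute)
    also have "(p + \<epsilon> *\<^sub>R S p) \<bullet> v \<le> norm (p + \<epsilon> *\<^sub>R S p) * norm v" by (rule norm_cauchy_schwarz)
    also have "\<dots> \<le> norm (p + \<epsilon> *\<^sub>R S p)" using v by (simp add: mult_left_le)
    also have "\<dots> \<le> 1 + \<epsilon> * (p \<bullet> S p) + \<epsilon>^2 * Bs^2 / 2"
      using sqrt_bound[OF p less_imp_le[OF e(1)] _ eB] Bs(2)[of p] p by simp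
    finally have main: "\<psi> p \<le> 1 + \<epsilon> * g p + \<epsilon>^2 * Bs^2 / 2"
      using psi_y by (simp add: g_def algebra_simps)
    have gp: "g p \<le> Bs + norm z"
    proof -
      have "p \<bullet> S p \<le> norm p * norm (S p)" by (rule norm_cauchy_schwarz)
      also have "\<dots> \<le> Bs" using Bs(2)[of p] p by simp
      finally have 1: "p \<bullet> S p \<le> Bs" .
      have "z \<bullet> p \<le> norm z * norm p" by (rule norm_cauchy_schwarz)
      then have 2: "z \<bullet> p \<le> norm z" using p by simp
      show ?thesis using 1 2 by (simp add: g_def)
    qed
    have sq: "\<epsilon>^2 * Bs^2 / 2 \<le> \<epsilon> * (Bs^2 / 2)"
      using mult_right_mono[OF e_le1, of "Bs * Bs"] e by (simp add: power2_eq_square)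
    have etaP: "\<eta> \<le> \<Phi> p" by (rule etale[OF p])
    show False
    proof (cases "- g p \<ge> \<eta>")
      case True
      have "1 \<le> 1 + \<epsilon> * g p + \<epsilon>^2 * Bs^2 / 2" using psi_ge1[OF p] main by linarith
      moreover have "\<epsilon> * g p \<le> - (\<epsilon> * \<eta>)"
      proof -
        have "\<epsilon> * \<eta> \<le> \<epsilon> * (- g p)" using True e by (intro mult_left_mono) auto
        then show ?thesis by simp
      qed
      moreover have "\<epsilon>^2 * Bs^2 / 2 < \<epsilon> * \<eta>"
      proof -
        have "\<epsilon> * (Bs^2 / 2) \<le> \<epsilon> * C" using C e by (simp add: mult_left_mono)
        also have "\<dots> < \<eta>" by (rule e2)
        finally have "\<epsilon> * (Bs^2 / 2) < \<eta>" .
        then have "\<epsilon> * (\<epsilon> * (Bs^2 / 2)) < \<epsilon> * \<eta>" using e by simp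
        then show ?thesis by (simp add: power2_eq_square)
      qed
      ultimately show False by linarith
    next
      case False
      then have "\<psi> p - 1 \<ge> \<eta>" using etaP by (simp add: \<Phi>_def)
      moreover have "\<epsilon> * g p \<le> \<epsilon> * (Bs + norm z)" using gp e by (simp add: mult_left_mono)
      moreover have "\<epsilon> * (Bs + norm z) + \<epsilon> * (Bs^2 / 2) < \<eta>"
      proof -
        have "\<epsilon> * (Bs + norm z) + \<epsilon> * (Bs^2 / 2) = \<epsilon> * (Bs + norm z + Bs^2 / 2)" by (simp add: algebra_simps)
        also have "\<dots> \<le> \<epsilon> * C" using C e by (simp add: mult_left_mono)
        finally show ?thesis using e2 by linarith
      qed
      ultimately show False using main sq by linarith
    qed
  qed
  ultimately show ?thesis by blast
qed

lemma cmat_id: "cmat (\<lambda>x::'a::euclidean_space. x) = mat 1"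
  by (simp add: vec_eq_iff cmat_entry bvec_inner mat_def)

lemma det_cmat_nz:
  fixes A :: "'a::euclidean_space \<Rightarrow> 'a"
  assumes "linear A" "bij A"
  shows "det (cmat A) \<noteq> 0"
proof -
  have Ai: "linear (inv A)" "\<And>x. A (inv A x) = x" using linear_inv_op[OF assms] by auto
  have "A \<circ> inv A = (\<lambda>x. x)" using Ai by (auto simp: fun_eq_iff)
  then have "cmat A ** cmat (inv A) = mat 1" using cmat_comp[OF assms(1) Ai(1)] cmat_id by metis
  then have "det (cmat A) * det (cmat (inv A)) = 1" by (metis det_mul det_I)
  then show ?thesis by auto
qed

lemma measure_cball_pos: "measure lebesgue (cball (0::'a::euclidean_space) 1) > 0"
  using content_cball_pos[of 1 "0::'a"] by (simp add: measure_completion)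

lemma orth_compl_scale: "x \<in> orth_compl F \<Longrightarrow> c *\<^sub>R x \<in> orth_compl F"
  by (simp add: orth_compl_def)

lemma volume_contra:
  fixes A S :: "'a::euclidean_space \<Rightarrow> 'a" and K F :: "'a set" and z :: 'a and b :: real
  assumes cb: "convex_body K" and F: "subspace F" and FA: "F_operator F A" and pd: "pos_def_op A"
    and sub: "A ` cball 0 1 \<subseteq> K"
    and maxv: "\<And>E'. ellipsoid_rev F E' \<Longrightarrow> E' \<subseteq> K \<Longrightarrow>
           measure lebesgue E' \<le> measure lebesgue (A ` cball 0 1)"
    and linS: "linear S" and symS: "\<And>x y. S x \<bullet> y = x \<bullet> S y"
    and SF: "\<And>x. x \<in> F \<Longrightarrow> S x \<in> F" and Sb: "\<And>x. x \<in> orth_compl F \<Longrightarrow> S x = b *\<^sub>R x"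
    and tr: "(\<Sum>e\<in>Basis. e \<bullet> S e) > 0"
    and neg: "\<And>u. norm u = 1 \<Longrightarrow> A u \<in> frontier K \<Longrightarrow> u \<bullet> S u + z \<bullet> u < 0"
  shows False
proof -
  have lin: "linear A" and bj: "bij A" and AF: "A ` F \<subseteq> F" and AFc: "A ` orth_compl F \<subseteq> orth_compl F"
    using FA by (auto simp: F_operator_def)
  obtain cA where cA: "cA \<noteq> 0" "\<And>x. x \<in> orth_compl F \<Longrightarrow> A x = cA *\<^sub>R x"
    using FA by (auto simp: F_operator_def)
  have cK: "compact K" and cvx: "convex K" using cb by (auto simp: convex_body_def)
  obtain \<epsilon>1 where e1: "\<epsilon>1 > 0" "\<And>\<epsilon> v. 0 < \<epsilon> \<Longrightarrow> \<epsilon> < \<epsilon>1 \<Longrightarrow> norm v \<le> 1 \<Longrightarrow> A (v + \<epsilon> *\<^sub>R S v + \<epsilon> *\<^sub>R z) \<in> K"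
    using containment[OF lin bj cK cvx sub linS symS neg] by blast
  define N where "N = cmat S"
  have trN: "trace N > 0"
  proof -
    have "trace N = (\<Sum>i\<in>UNIV. bvec i \<bullet> S (bvec i))"
      by (simp add: trace_def N_def cmat_entry inner_commute)
    also have "\<dots> = (\<Sum>e\<in>Basis. e \<bullet> S e)" by (rule sum_bvec)
    finally show ?thesis using tr by simp
  qed
  obtain d0 where d0: "d0 > 0" "\<And>t. 0 < t \<Longrightarrow> t < d0 \<Longrightarrow> det (\<chi> i j. (if i = j then 1 else 0) + t * N$i$j) > 1"
    using det_perturb[OF trN] by blast
  obtain Bs where Bs: "Bs > 0" "\<And>x. norm (S x) \<le> Bs * norm x" using linear_bounded_pos[OF linS] by blast
  have Bb: "Bs + \<bar>b\<bar> + 1 > 0" using Bs by simp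
  define m where "m = min (min \<epsilon>1 d0) (1 / (Bs + \<bar>b\<bar> + 1))"
  have m: "m > 0" "m \<le> \<epsilon>1" "m \<le> d0" "m \<le> 1 / (Bs + \<bar>b\<bar> + 1)"
    using e1 d0 Bb by (auto simp: m_def)
  define \<epsilon> where "\<epsilon> = m / 2"
  have e0: "\<epsilon> > 0" "\<epsilon> < m" using m by (auto simp: \<epsilon>_def)
  have eE: "\<epsilon> < \<epsilon>1" "\<epsilon> < d0" using e0 m by auto
  have "\<epsilon> < 1 / (Bs + \<bar>b\<bar> + 1)" using e0 m by auto
  then have eB: "\<epsilon> * (Bs + \<bar>b\<bar> + 1) < 1" using Bb by (simp add: pos_less_divide_eq)
  have eBs: "\<epsilon> * Bs < 1" and eb: "\<epsilon> * \<bar>b\<bar> < 1"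
    using eB e0(1) Bs by (simp_all add: algebra_simps) (smt (verit) mult_nonneg_nonneg abs_ge_zero)+
  define M where "M x = x + \<epsilon> *\<^sub>R S x" for x
  have linM: "linear M"
    by (rule linearI) (auto simp: M_def linear_add[OF linS] linear_scale[OF linS] algebra_simps)
  have injM: "inj M"
  proof -
    have "x = 0" if "M x = 0" for x
    proof (rule ccontr)
      assume "x \<noteq> 0"
      from that have "x = - (\<epsilon> *\<^sub>R S x)" by (simp add: M_def eq_neg_iff_add_eq_0)
      then have "norm x = \<epsilon> * norm (S x)" using e0(1) by (metis norm_minus_cancel norm_scaleR abs_of_pos)
      also have "\<dots> \<le> \<epsilon> * (Bs * norm x)" using Bs(2)[of x] e0(1) by (simp add: mult_left_mono)
      also have "\<dots> < norm x" using eBs \<open>x \<noteq> 0\<close> by (simp add: mult.assoc[symmetric])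
      finally show False by simp
    qed
    then show ?thesis using linM by (simp add: linear_injective_0)
  qed
  have bjM: "bij M" using linM injM by (simp add: bij_def linear_injective_imp_surjective)
  define G where "G = A \<circ> M"
  have linG: "linear G" unfolding G_def using linear_compose[OF linM lin] .
  have MF: "M x \<in> F" if "x \<in> F" for x
    using that SF F by (simp add: M_def subspace_add subspace_scale)
  have MFc: "M x = (1 + \<epsilon> * b) *\<^sub>R x" if "x \<in> orth_compl F" for x
    using Sb[OF that] by (simp add: M_def algebra_simps)
  have FG: "F_operator F G"
    unfolding F_operator_def
  proof (intro conjI)
    show "linear G" by (rule linG)
    show "bij G" unfolding G_def using bjM bj by (rule bij_comp)
    show "G ` F \<subseteq> F" unfolding G_def using MF AF by auto
    show "G ` orth_compl F \<subseteq> orth_compl F" unfolding G_def using MFc AFc orth_compl_scale by fastforce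
    have "1 + \<epsilon> * b \<noteq> 0"
    proof -
      have "\<epsilon> * \<bar>b\<bar> = \<bar>\<epsilon> * b\<bar>" using e0(1) by (simp add: abs_mult)
      then show ?thesis using eb by linarith
    qed
    then show "\<exists>c. c \<noteq> 0 \<and> (\<forall>x\<in>orth_compl F. G x = c *\<^sub>R x)"
      using cA MFc orth_compl_scale
      by (intro exI[of _ "cA * (1 + \<epsilon> * b)"]) (auto simp: G_def linear_scale[OF lin])
  qed
  define E' where "E' = (\<lambda>x. G x + A (\<epsilon> *\<^sub>R z)) ` cball 0 1"
  have ell: "ellipsoid_rev F E'" unfolding ellipsoid_rev_def E'_def using FG by blast
  have EK: "E' \<subseteq> K"
  proof
    fix y assume "y \<in> E'"
    then obtain v where v: "norm v \<le> 1" "y = G v + A (\<epsilon> *\<^sub>R z)" by (auto simp: E'_def)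
    then have "y = A (v + \<epsilon> *\<^sub>R S v + \<epsilon> *\<^sub>R z)"
      by (simp add: G_def M_def linear_add[OF lin])
    then show "y \<in> K" using e1(2)[OF e0(1) eE(1) v(1)] by simp
  qed
  have cball_c: "compact (cball (0::'a) 1)" by simp
  have vE: "measure lebesgue E' = measure lebesgue (G ` cball 0 1)"
  proof -
    have "E' = (+) (A (\<epsilon> *\<^sub>R z)) ` (G ` cball 0 1)" unfolding E'_def by (auto simp: image_image add.commute)
    then show ?thesis by (simp add: measure_translation)
  qed
  have cmatM: "cmat M = (\<chi> i j. (if i = j then 1 else 0) + \<epsilon> * N$i$j)"
    by (simp add: vec_eq_iff cmat_entry M_def N_def inner_add_left bvec_inner)
  have detM: "\<bar>det (cmat M)\<bar> > 1" using d0(2)[OF e0(1) eE(2)] cmatM by simp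
  have detA: "\<bar>det (cmat A)\<bar> > 0" using det_cmat_nz[OF lin bj] by simp
  have vA: "measure lebesgue (A ` cball 0 1) = \<bar>det (cmat A)\<bar> * measure lebesgue (cball (0::'a) 1)"
    by (rule measure_linear_image_gen[OF lin cball_c])
  have vG: "measure lebesgue (G ` cball 0 1) = \<bar>det (cmat M)\<bar> * (\<bar>det (cmat A)\<bar> * measure lebesgue (cball (0::'a) 1))"
    using measure_linear_image_gen[OF linG cball_c] cmat_comp[OF lin linM]
    by (simp add: G_def det_mul abs_mult)
  have pos: "\<bar>det (cmat A)\<bar> * measure lebesgue (cball (0::'a) 1) > 0"
    using detA measure_cball_pos by simp
  have "measure lebesgue E' > measure lebesgue (A ` cball 0 1)"
    unfolding vE vG vA using mult_strict_right_mono[OF detM pos] by simp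
  moreover have "measure lebesgue E' \<le> measure lebesgue (A ` cball 0 1)" by (rule maxv[OF ell EK])
  ultimately show False by simp
qed

definition PhiM :: "'a::euclidean_space set \<Rightarrow> 'a \<Rightarrow> ('a^('a bidx)) \<times> 'a" where
  "PhiM F u = ((\<chi> i. (u \<bullet> orth_proj F (bvec i)) *\<^sub>R orth_proj F u), u)"

definition z0M :: "'a::euclidean_space set \<Rightarrow> ('a^('a bidx)) \<times> 'a" where
  "z0M F = ((\<chi> i. (1 / real DIM('a)) *\<^sub>R orth_proj F (bvec i)), 0)"

lemma parseval: "(\<Sum>e\<in>Basis. (a \<bullet> e) * (c \<bullet> e)) = a \<bullet> (c::'a::euclidean_space)"
  by (simp add: euclidean_inner[of a c])

lemma hull_mem:
  fixes F U :: "'a::euclidean_space set"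
  assumes F: "subspace F" and cU: "compact U" and Us: "\<And>u. u \<in> U \<Longrightarrow> norm u = 1"
    and noS: "\<And>S z b. linear S \<Longrightarrow> (\<forall>x y. S x \<bullet> y = x \<bullet> S y) \<Longrightarrow> (\<forall>x\<in>F. S x \<in> F) \<Longrightarrow>
        (\<forall>x\<in>orth_compl F. S x = b *\<^sub>R x) \<Longrightarrow> (\<Sum>e\<in>Basis. e \<bullet> S e) > 0 \<Longrightarrow>
        (\<forall>u\<in>U. u \<bullet> S u + z \<bullet> u < 0) \<Longrightarrow> False"
  shows "z0M F \<in> convex hull (PhiM F ` U)"
proof (rule ccontr)
  assume nmem: "z0M F \<notin> convex hull (PhiM F ` U)"
  define P where "P = orth_proj F"
  have linP: "linear P" unfolding P_def by (rule proj_linear[OF F])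
  have Psym: "P x \<bullet> y = x \<bullet> P y" for x y unfolding P_def by (rule proj_sym[OF F])
  have PF: "P x \<in> F" for x unfolding P_def by (rule proj_in[OF F])
  have PP: "P (P x) = P x" for x unfolding P_def using proj_id[OF F proj_in[OF F]] .
  have P0: "P x = 0" if "x \<in> orth_compl F" for x unfolding P_def by (rule proj_zero[OF F that])
  have contP: "continuous_on UNIV P" using linP by (simp add: linear_continuous_on linear_linear)
  have contPhi: "continuous_on U (PhiM F)"
    unfolding PhiM_def P_def[symmetric]
    by (intro continuous_intros continuous_on_subset[OF contP]) auto
  have cC: "compact (convex hull (PhiM F ` U))"
    by (intro compact_convex_hull compact_continuous_image contPhi cU)
  obtain a \<beta> where ab: "a \<bullet> z0M F < \<beta>" "\<And>x. x \<in> convex hull (PhiM F ` U) \<Longrightarrow> \<beta> < a \<bullet> x"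
    using separating_hyperplane_closed_point[OF convex_convex_hull compact_imp_closed[OF cC] nmem] by blast
  define h where "h = fst a"
  define w where "w = snd a"
  define Hs where "Hs x = (1/2) *\<^sub>R (\<Sum>i\<in>UNIV. (x \<bullet> P (bvec i)) *\<^sub>R P (h$i) + (x \<bullet> P (h$i)) *\<^sub>R P (bvec i))" for x
  define S where "S x = \<beta> *\<^sub>R x - Hs x" for x
  have linHs: "linear Hs"
    by (rule linearI) (simp_all add: Hs_def inner_add_left scaleR_add_left sum.distrib scaleR_add_right
         scaleR_sum_right algebra_simps)
  have linS: "linear S" unfolding S_def[abs_def]
    by (rule linearI) (simp_all add: linear_add[OF linHs] linear_scale[OF linHs] algebra_simps)
  have HsI: "Hs x \<bullet> y = (1/2) * (\<Sum>i\<in>UNIV. (x \<bullet> P (bvec i)) * (y \<bullet> P (h$i)) + (x \<bullet> P (h$i)) * (y \<bullet> P (bvec i)))" for x y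
    unfolding Hs_def inner_scaleR_left inner_sum_left inner_add_left
    by (simp add: inner_commute[of _ y])
  have symS: "\<forall>x y. S x \<bullet> y = x \<bullet> S y"
  proof (intro allI)
    fix x y
    have "Hs x \<bullet> y = Hs y \<bullet> x" unfolding HsI by (rule arg_cong[where f="\<lambda>s. (1/2) * s"], rule sum.cong) auto
    then show "S x \<bullet> y = x \<bullet> S y" by (simp add: S_def inner_diff_left inner_diff_right inner_commute)
  qed
  have HsF: "Hs x \<in> F" for x
    unfolding Hs_def using F PF
    by (intro subspace_scale subspace_sum subspace_add) auto
  have SF: "\<forall>x\<in>F. S x \<in> F" using F HsF by (simp add: S_def subspace_diff subspace_scale)
  have Sb: "\<forall>x\<in>orth_compl F. S x = \<beta> *\<^sub>R x"
  proof
    fix x assume x: "x \<in> orth_compl F"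
    have "x \<bullet> P y = 0" for y using Psym[of x y] P0[OF x] by simp
    then have "Hs x = 0" by (simp add: Hs_def)
    then show "S x = \<beta> *\<^sub>R x" by (simp add: S_def)
  qed
  have trHs: "(\<Sum>e\<in>Basis. e \<bullet> Hs e) = (\<Sum>i\<in>UNIV. h$i \<bullet> P (bvec i))"
  proof -
    have eHe: "e \<bullet> Hs e = (\<Sum>i\<in>UNIV. (P (bvec i) \<bullet> e) * (P (h$i) \<bullet> e))" for e
    proof -
      have "e \<bullet> Hs e = Hs e \<bullet> e" by (rule inner_commute)
      also have "\<dots> = (1/2) * (\<Sum>i\<in>UNIV. (e \<bullet> P (bvec i)) * (e \<bullet> P (h$i)) + (e \<bullet> P (h$i)) * (e \<bullet> P (bvec i)))"
        by (rule HsI)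
      also have "\<dots> = (1/2) * (\<Sum>i\<in>UNIV. 2 * ((P (bvec i) \<bullet> e) * (P (h$i) \<bullet> e)))"
        by (intro arg_cong[where f="\<lambda>s. (1/2) * s"] sum.cong refl) (simp add: inner_commute[of e])
      also have "\<dots> = (\<Sum>i\<in>UNIV. (P (bvec i) \<bullet> e) * (P (h$i) \<bullet> e))"
        by (simp add: sum_distrib_left[symmetric])
      finally show ?thesis .
    qed
    have "(\<Sum>e\<in>Basis. e \<bullet> Hs e) = (\<Sum>e\<in>Basis. \<Sum>i\<in>UNIV. (P (bvec i) \<bullet> e) * (P (h$i) \<bullet> e))"
      by (simp only: eHe)
    also have "\<dots> = (\<Sum>i\<in>UNIV. \<Sum>e\<in>Basis. (P (bvec i) \<bullet> e) * (P (h$i) \<bullet> e))" by (rule sum.swap)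
    also have "\<dots> = (\<Sum>i\<in>UNIV. P (bvec i) \<bullet> P (h$i))" by (simp add: parseval)
    also have "\<dots> = (\<Sum>i\<in>UNIV. h$i \<bullet> P (bvec i))"
      by (rule sum.cong[OF refl]) (metis Psym PP inner_commute)
    finally show ?thesis .
  qed
  have trS: "(\<Sum>e\<in>Basis. e \<bullet> S e) > 0"
  proof -
    have "a \<bullet> z0M F = (1 / real DIM('a)) * (\<Sum>i\<in>UNIV. h$i \<bullet> P (bvec i))"
      by (simp add: z0M_def inner_prod_def inner_vec_def h_def P_def sum_distrib_left)
    then have "(\<Sum>i\<in>UNIV. h$i \<bullet> P (bvec i)) = real DIM('a) * (a \<bullet> z0M F)" by (simp add: field_simps)
    moreover have "real DIM('a) * (a \<bullet> z0M F) < real DIM('a) * \<beta>" using ab(1) by simp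
    ultimately have "(\<Sum>i\<in>UNIV. h$i \<bullet> P (bvec i)) < real DIM('a) * \<beta>" by simp
    moreover have "(\<Sum>e\<in>Basis. e \<bullet> S e) = real DIM('a) * \<beta> - (\<Sum>e\<in>Basis. e \<bullet> Hs e)"
      by (simp add: S_def inner_diff_right sum_subtractf)
    ultimately show ?thesis using trHs by simp
  qed
  have negU: "\<forall>u\<in>U. u \<bullet> S u + (- w) \<bullet> u < 0"
  proof
    fix u assume u: "u \<in> U"
    have "PhiM F u \<in> convex hull (PhiM F ` U)" by (intro hull_inc imageI u)
    then have "\<beta> < a \<bullet> PhiM F u" by (rule ab(2))
    moreover have "a \<bullet> PhiM F u = (\<Sum>i\<in>UNIV. (u \<bullet> P (bvec i)) * (u \<bullet> P (h$i))) + w \<bullet> u"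
    proof -
      have "a \<bullet> PhiM F u = (\<Sum>i\<in>UNIV. h$i \<bullet> ((u \<bullet> P (bvec i)) *\<^sub>R P u)) + w \<bullet> u"
        by (simp add: PhiM_def inner_prod_def inner_vec_def h_def w_def P_def)
      also have "(\<Sum>i\<in>UNIV. h$i \<bullet> ((u \<bullet> P (bvec i)) *\<^sub>R P u)) = (\<Sum>i\<in>UNIV. (u \<bullet> P (bvec i)) * (u \<bullet> P (h$i)))"
      proof (rule sum.cong[OF refl])
        fix i
        have "h$i \<bullet> P u = u \<bullet> P (h$i)" using Psym[of u "h$i"] by (simp add: inner_commute)
        then show "h$i \<bullet> ((u \<bullet> P (bvec i)) *\<^sub>R P u) = (u \<bullet> P (bvec i)) * (u \<bullet> P (h$i))" by simp
      qed
      finally show ?thesis .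
    qed
    moreover have "u \<bullet> Hs u = (\<Sum>i\<in>UNIV. (u \<bullet> P (bvec i)) * (u \<bullet> P (h$i)))"
    proof -
      have "u \<bullet> Hs u = Hs u \<bullet> u" by (rule inner_commute)
      also have "\<dots> = (1/2) * (\<Sum>i\<in>UNIV. (u \<bullet> P (bvec i)) * (u \<bullet> P (h$i)) + (u \<bullet> P (h$i)) * (u \<bullet> P (bvec i)))"
        by (rule HsI)
      also have "\<dots> = (1/2) * (\<Sum>i\<in>UNIV. 2 * ((u \<bullet> P (bvec i)) * (u \<bullet> P (h$i))))"
        by (intro arg_cong[where f="\<lambda>s. (1/2) * s"] sum.cong refl) simp
      also have "\<dots> = (\<Sum>i\<in>UNIV. (u \<bullet> P (bvec i)) * (u \<bullet> P (h$i)))"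
        by (simp add: sum_distrib_left[symmetric])
      finally show ?thesis .
    qed
    moreover have "u \<bullet> u = 1" using Us[OF u] by (simp add: dot_square_norm)
    ultimately show "u \<bullet> S u + (- w) \<bullet> u < 0" by (simp add: S_def inner_diff_right)
  qed
  show False using noS[OF linS symS SF Sb trS negU] .
qed

lemma op_identity:
  fixes F :: "'a::euclidean_space set" and u :: "nat \<Rightarrow> 'a" and \<alpha> :: "nat \<Rightarrow> real"
  assumes F: "subspace F"
    and H: "\<And>k. (\<Sum>i<m. (\<alpha> i * (u i \<bullet> orth_proj F (bvec k))) *\<^sub>R orth_proj F (u i)) = orth_proj F (bvec k)"
  shows "(\<lambda>x. orth_proj F (\<Sum>i<m. \<alpha> i *\<^sub>R tensor_self (u i) (orth_proj F x))) = orth_proj F"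
proof
  fix x
  define P where "P = orth_proj F"
  have linP: "linear P" unfolding P_def by (rule proj_linear[OF F])
  have PP: "P (P y) = P y" for y unfolding P_def using proj_id[OF F proj_in[OF F]] .
  have H': "(\<Sum>i<m. (\<alpha> i * (u i \<bullet> P (bvec k))) *\<^sub>R P (u i)) = P (bvec k)" for k using H unfolding P_def .
  define y where "y = P x"
  have Py: "P y = (\<Sum>k\<in>UNIV. (y \<bullet> bvec k) *\<^sub>R P (bvec k))"
  proof -
    have "y = (\<Sum>b\<in>Basis. (y \<bullet> b) *\<^sub>R b)" by (simp add: euclidean_representation)
    also have "\<dots> = (\<Sum>k\<in>UNIV. (y \<bullet> bvec k) *\<^sub>R bvec k)" using sum_bvec[of "\<lambda>b. (y \<bullet> b) *\<^sub>R b"] by simp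
    finally have "P y = P (\<Sum>k\<in>UNIV. (y \<bullet> bvec k) *\<^sub>R bvec k)" by simp
    then show ?thesis by (simp add: linear_sum[OF linP] linear_scale[OF linP])
  qed
  have uPy: "u i \<bullet> P y = (\<Sum>k\<in>UNIV. (y \<bullet> bvec k) * (u i \<bullet> P (bvec k)))" for i
    by (simp add: Py inner_sum_right)
  have "P (\<Sum>i<m. \<alpha> i *\<^sub>R tensor_self (u i) y) = (\<Sum>i<m. (\<alpha> i * (u i \<bullet> y)) *\<^sub>R P (u i))"
    by (simp add: tensor_self_def linear_sum[OF linP] linear_scale[OF linP])
  also have "\<dots> = (\<Sum>i<m. (\<alpha> i * (u i \<bullet> P y)) *\<^sub>R P (u i))"
    by (simp add: y_def PP)
  also have "\<dots> = (\<Sum>i<m. \<Sum>k\<in>UNIV. (y \<bullet> bvec k) *\<^sub>R ((\<alpha> i * (u i \<bullet> P (bvec k))) *\<^sub>R P (u i)))"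
    by (simp add: uPy sum_distrib_left scaleR_sum_left algebra_simps)
  also have "\<dots> = (\<Sum>k\<in>UNIV. (y \<bullet> bvec k) *\<^sub>R (\<Sum>i<m. (\<alpha> i * (u i \<bullet> P (bvec k))) *\<^sub>R P (u i)))"
    by (subst sum.swap) (simp add: scaleR_sum_right)
  also have "\<dots> = P y" by (simp add: H' Py)
  finally show "orth_proj F (\<Sum>i<m. \<alpha> i *\<^sub>R tensor_self (u i) (orth_proj F x)) = orth_proj F x"
    by (simp add: y_def P_def PP[unfolded P_def])
qed

theorem mainTheorem14:
  fixes K F :: "'a::euclidean_space set" and A :: "'a \<Rightarrow> 'a"
  assumes "convex_body K"
    and "subspace F"
    and "F_operator F A"
    and "pos_def_op A"
    and "A ` cball 0 1 \<subseteq> K"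
    and "\<And>E'. ellipsoid_rev F E' \<Longrightarrow> E' \<subseteq> K \<Longrightarrow>
           measure lebesgue E' \<le> measure lebesgue (A ` cball 0 1)"
  shows "\<exists>(m::nat) (u::nat \<Rightarrow> 'a) (\<alpha>::nat \<Rightarrow> real).
           (\<forall>i<m. norm (u i) = 1 \<and> \<alpha> i > 0 \<and>
                   contact_pair (A ` cball 0 1) K (A (u i)) (inv A (u i))) \<and>
           (\<lambda>x. orth_proj F ((\<Sum>i<m. \<alpha> i *\<^sub>R tensor_self (u i) (orth_proj F x)))) = orth_proj F \<and>
           (\<Sum>i<m. \<alpha> i *\<^sub>R u i) = 0 \<and>
           (\<Sum>i<m. \<alpha> i) = real DIM('a)"
proof -
  note cb = assms(1) and F = assms(2) and FA = assms(3) and pd = assms(4) and sub = assms(5) and maxv = assms(6)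
  have lin: "linear A" and bj: "bij A" using FA by (auto simp: F_operator_def)
  have symA: "\<And>x y. A x \<bullet> y = x \<bullet> A y" using pd by (auto simp: pos_def_op_def)
  have cK: "compact K" and cvx: "convex K" using cb by (auto simp: convex_body_def)
  define U where "U = sphere (0::'a) 1 \<inter> A -` frontier K"
  have Us: "\<And>u. u \<in> U \<Longrightarrow> norm u = 1" by (auto simp: U_def)
  have cU: "compact U" unfolding U_def
  proof (rule compact_Int_closed[OF compact_sphere])
    show "closed (A -` frontier K)"
      using lin by (intro continuous_closed_vimage frontier_closed) (simp add: linear_continuous_at linear_linear)
  qed
  have "z0M F \<in> convex hull (PhiM F ` U)"
  proof (rule hull_mem[OF F cU Us])
    fix S z b
    assume "linear S" "\<forall>x y. S x \<bullet> y = x \<bullet> S y" "\<forall>x\<in>F. S x \<in> F" "\<forall>x\<in>orth_compl F. S x = b *\<^sub>R x"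
      "(\<Sum>e\<in>Basis. e \<bullet> S e) > 0" "\<forall>u\<in>U. u \<bullet> S u + z \<bullet> u < 0"
    then show False
      using volume_contra[OF cb F FA pd sub maxv, of S b z] by (auto simp: U_def)
  qed
  then obtain T lam where T: "finite T" "T \<subseteq> PhiM F ` U" "\<forall>x\<in>T. 0 \<le> lam x" "sum lam T = 1"
      "(\<Sum>v\<in>T. lam v *\<^sub>R v) = z0M F"
    unfolding convex_hull_explicit by blast
  define T' where "T' = {x\<in>T. lam x > 0}"
  have fT': "finite T'" using T(1) by (simp add: T'_def)
  have sumT': "(\<Sum>x\<in>T'. f x) = (\<Sum>x\<in>T. f x)" if "\<And>x. x \<in> T \<Longrightarrow> lam x = 0 \<Longrightarrow> f x = 0" for f :: "_ \<Rightarrow> 'b::comm_monoid_add"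
    unfolding T'_def using T(1) T(3) that by (intro sum.mono_neutral_left) (auto simp: less_eq_real_def)
  obtain e where e: "bij_betw e {0..<card T'} T'" using ex_bij_betw_nat_finite[OF fT'] by blast
  define m where "m = card T'"
  have e': "bij_betw e {..<m} T'" using e by (simp add: m_def lessThan_atLeast0)
  have reidx: "(\<Sum>i<m. f (e i)) = (\<Sum>x\<in>T'. f x)" for f :: "_ \<Rightarrow> 'b::comm_monoid_add"
    using sum.reindex_bij_betw[OF e'] .
  define pre where "pre = inv_into U (PhiM F)"
  have pre: "pre x \<in> U" "PhiM F (pre x) = x" if "x \<in> T'" for x
    using that T(2) unfolding T'_def pre_def by (auto intro: inv_into_into f_inv_into_f)
  define u where "u i = pre (e i)" for i
  define \<alpha> where "\<alpha> i = real DIM('a) * lam (e i)" for i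
  have eT: "e i \<in> T'" if "i < m" for i using e' that by (auto dest: bij_betwE)
  have uU: "u i \<in> U" and Phiu: "PhiM F (u i) = e i" if "i < m" for i
    using pre[OF eT[OF that]] by (auto simp: u_def)
  have snd_u: "snd (e i) = u i" if "i < m" for i using arg_cong[OF Phiu[OF that], of snd] by (simp add: PhiM_def)
  have c1: "\<forall>i<m. norm (u i) = 1 \<and> \<alpha> i > 0 \<and> contact_pair (A ` cball 0 1) K (A (u i)) (inv A (u i))"
  proof (intro allI impI conjI)
    fix i assume i: "i < m"
    show "norm (u i) = 1" using Us uU i by blast
    show "\<alpha> i > 0" using eT[OF i] by (simp add: \<alpha>_def T'_def)
    show "contact_pair (A ` cball 0 1) K (A (u i)) (inv A (u i))"
      using contact[OF lin bj symA cvx sub] uU[OF i] by (auto simp: U_def)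
  qed
  have c4: "(\<Sum>i<m. \<alpha> i) = real DIM('a)"
  proof -
    have "(\<Sum>i<m. \<alpha> i) = real DIM('a) * (\<Sum>i<m. lam (e i))" by (simp add: \<alpha>_def sum_distrib_left)
    also have "(\<Sum>i<m. lam (e i)) = (\<Sum>x\<in>T'. lam x)" by (rule reidx)
    also have "\<dots> = 1" using T(4) by (subst sumT') auto
    finally show ?thesis by simp
  qed
  have zsum: "(\<Sum>x\<in>T'. lam x *\<^sub>R x) = z0M F" using T(5) by (subst sumT') auto
  have c3: "(\<Sum>i<m. \<alpha> i *\<^sub>R u i) = 0"
  proof -
    have "(\<Sum>i<m. \<alpha> i *\<^sub>R u i) = real DIM('a) *\<^sub>R (\<Sum>i<m. lam (e i) *\<^sub>R snd (e i))"
      by (simp add: \<alpha>_def scaleR_sum_right snd_u)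
    also have "(\<Sum>i<m. lam (e i) *\<^sub>R snd (e i)) = snd (\<Sum>x\<in>T'. lam x *\<^sub>R x)"
      by (simp add: reidx[of "\<lambda>x. lam x *\<^sub>R snd x"] snd_sum)
    also have "\<dots> = 0" by (simp add: zsum z0M_def)
    finally show ?thesis by simp
  qed
  have c2: "(\<lambda>x. orth_proj F ((\<Sum>i<m. \<alpha> i *\<^sub>R tensor_self (u i) (orth_proj F x)))) = orth_proj F"
  proof (rule op_identity[OF F])
    fix k
    have "(fst (\<Sum>x\<in>T'. lam x *\<^sub>R x)) $ k = (1 / real DIM('a)) *\<^sub>R orth_proj F (bvec k)"
      by (simp add: zsum z0M_def)
    moreover have "(fst (\<Sum>x\<in>T'. lam x *\<^sub>R x)) $ k = (\<Sum>i<m. lam (e i) *\<^sub>R (fst (e i) $ k))"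
      by (simp add: fst_sum sum_component reidx[of "\<lambda>x. lam x *\<^sub>R (fst x $ k)"])
    moreover have fe: "fst (e i) $ k = (u i \<bullet> orth_proj F (bvec k)) *\<^sub>R orth_proj F (u i)" if "i < m" for i
      using arg_cong[OF Phiu[OF that], of "\<lambda>p. fst p $ k"] by (simp add: PhiM_def)
    moreover have "(\<Sum>i<m. lam (e i) *\<^sub>R (fst (e i) $ k)) = (\<Sum>i<m. lam (e i) *\<^sub>R ((u i \<bullet> orth_proj F (bvec k)) *\<^sub>R orth_proj F (u i)))"
      by (rule sum.cong[OF refl]) (simp add: fe)
    ultimately have "(\<Sum>i<m. lam (e i) *\<^sub>R ((u i \<bullet> orth_proj F (bvec k)) *\<^sub>R orth_proj F (u i))) = (1 / real DIM('a)) *\<^sub>R orth_proj F (bvec k)"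
      by simp
    then have "real DIM('a) *\<^sub>R (\<Sum>i<m. lam (e i) *\<^sub>R ((u i \<bullet> orth_proj F (bvec k)) *\<^sub>R orth_proj F (u i))) = orth_proj F (bvec k)"
      by simp
    then show "(\<Sum>i<m. (\<alpha> i * (u i \<bullet> orth_proj F (bvec k))) *\<^sub>R orth_proj F (u i)) = orth_proj F (bvec k)"
      by (simp add: \<alpha>_def scaleR_sum_right algebra_simps)
  qed
  show ?thesis using c1 c2 c3 c4 by blast
qed

end
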